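(* For $n=3$ agents and $3$ items with the unit-range normalization, every ordinal mechanism $J$ (deterministic or randomized) satisfies $ar(J)\le 2/3$.
   Context: Agents $N=\{1,2,3\}$, items $M=\{1,2,3\}$, outcomes are bijections $\mu$ ($O$ the set of outcomes). Unit-range valuation functions: injective $u_i:M\to\mathbb R$ with $\max_j u_i(j)=1$ and $\min_j u_i(j)=0$; $V^3$ the set of profiles. A mechanism maps each profile to a distribution over $O$; it is ordinal if its output distribution is unchanged when any one agent's valuation function is replaced by another inducing the same ordering of the items. $ar(J)=\inf_{\mathbf u\in V^3}\mathbb E[\sum_i u_i(J(\mathbf u)_i)]/\max_{\mu\in O}\sum_i u_i(\mu_i)$. *)

theory Defs
  imports "HOL-Probability.Probability" "HOL-Library.Numeral_Type"
begin

text \<open>Agents N = \{1,2,3\} and items M = \{1,2,3\} are both modelled by the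
  three-element type 3 (elements 0, 1, 2).\<close>

type_synonym agent = "3"
type_synonym item = "3"
type_synonym valuation = "item \<Rightarrow> real"
type_synonym profile = "agent \<Rightarrow> valuation"
type_synonym outcome = "agent \<Rightarrow> item"

definition outcomes :: "outcome set" where
  "outcomes = {\<mu>. bij \<mu>}"

definition unit_range :: "valuation \<Rightarrow> bool" where
  "unit_range u \<longleftrightarrow> inj u \<and> Max (range u) = 1 \<and> Min (range u) = 0"

definition profiles :: "profile set" where
  "profiles = {u. \<forall>i. unit_range (u i)}"

definition mechanism :: "(profile \<Rightarrow> outcome pmf) \<Rightarrow> bool" where
  "mechanism J \<longleftrightarrow> (\<forall>u\<in>profiles. set_pmf (J u) \<subseteq> outcomes)"

definition ordinal :: "(profile \<Rightarrow> outcome pmf) \<Rightarrow> bool" where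
  "ordinal J \<longleftrightarrow> (\<forall>u\<in>profiles. \<forall>i v. unit_range v \<and>
      (\<forall>a b. v a < v b \<longleftrightarrow> u i a < u i b) \<longrightarrow> J (u(i := v)) = J u)"

definition social_welfare :: "profile \<Rightarrow> outcome \<Rightarrow> real" where
  "social_welfare u \<mu> = (\<Sum>i\<in>UNIV. u i (\<mu> i))"

definition opt_welfare :: "profile \<Rightarrow> real" where
  "opt_welfare u = Max (social_welfare u ` outcomes)"

definition approx_ratio :: "(profile \<Rightarrow> outcome pmf) \<Rightarrow> real" where
  "approx_ratio J = (INF u\<in>profiles.
      measure_pmf.expectation (J u) (social_welfare u) / opt_welfare u)"

end

theory Submission
  imports Defs
begin

lemma UNIV3: "(UNIV::3 set) = {0,1,2}"
proof -
  have "card {0,1,2::3} = card (UNIV::3 set)" by simp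
  thus ?thesis by (metis card_subset_eq finite subset_UNIV)
qed

lemma all3: "(x::3) = 0 \<or> x = 1 \<or> x = 2" using UNIV3 by blast

definition row :: "real \<Rightarrow> valuation" where
  "row x = (\<lambda>k. if k = 0 then 1 else if k = 1 then x else 0)"

definition prof :: "(agent \<Rightarrow> real) \<Rightarrow> profile" where
  "prof m = (\<lambda>i. row (m i))"

lemma range_row: "range (row x) = {1, x, 0}"
  unfolding UNIV3 by (auto simp: row_def)

lemma unit_range_row:
  assumes "0 < x" "x < 1"
  shows "unit_range (row x)"
proof -
  have "inj (row x)"
  proof (rule injI)
    fix a b assume "row x a = row x b"
    thus "a = b" using all3[of a] all3[of b] assms by (auto simp: row_def)
  qed
  moreover have "Max (range (row x)) = 1" unfolding range_row using assms
    by (simp add: max_def)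
  moreover have "Min (range (row x)) = 0" unfolding range_row using assms
    by (simp add: min_def)
  ultimately show ?thesis by (simp add: unit_range_def)
qed

lemma prof_in: "(\<And>i. 0 < m i \<and> m i < 1) \<Longrightarrow> prof m \<in> profiles"
  by (simp add: profiles_def prof_def unit_range_row)

lemma row_order: "0 < x \<Longrightarrow> x < 1 \<Longrightarrow> 0 < y \<Longrightarrow> y < 1 \<Longrightarrow>
   (row x a < row x b \<longleftrightarrow> row y a < row y b)"
  using all3[of a] all3[of b] by (auto simp: row_def)

lemma ord_step:
  assumes "ordinal J" "\<And>i. 0 < m i \<and> m i < 1" "0 < y" "y < 1"
  shows "J (prof (m(k := y))) = J (prof m)"
proof -
  have e: "prof (m(k := y)) = (prof m)(k := row y)"
    by (auto simp: prof_def)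
  have o: "\<forall>u\<in>profiles. \<forall>i v. unit_range v \<and>
      (\<forall>a b. v a < v b \<longleftrightarrow> u i a < u i b) \<longrightarrow> J (u(i := v)) = J u"
    using assms(1) unfolding ordinal_def .
  have c: "\<forall>a b. row y a < row y b \<longleftrightarrow> prof m k a < prof m k b"
    unfolding prof_def using row_order[OF assms(3,4)] assms(2)[of k] by blast
  have "J ((prof m)(k := row y)) = J (prof m)"
    using o prof_in[OF assms(2)] unit_range_row[OF assms(3,4)] c by simp
  thus ?thesis using e by simp
qed

lemma ord_J:
  assumes "ordinal J" "\<And>i. 0 < m i \<and> m i < 1"
  shows "J (prof m) = J (prof (\<lambda>_. 1/2))"
proof -
  define m0 where "m0 = (\<lambda>_::3. (1/2::real))"
  have m: "m = fun_upd (fun_upd (fun_upd m0 0 (m 0)) 1 (m 1)) 2 (m 2)"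
  proof (rule ext)
    fix x show "m x = fun_upd (fun_upd (fun_upd m0 0 (m 0)) 1 (m 1)) 2 (m 2) x"
      using all3[of x] by auto
  qed
  have h0: "\<And>i. 0 < m0 i \<and> m0 i < 1" by (simp add: m0_def)
  define m1 where "m1 = fun_upd m0 0 (m 0)"
  define m2 where "m2 = fun_upd m1 1 (m 1)"
  have h1: "\<And>i. 0 < m1 i \<and> m1 i < 1" using h0 assms(2) by (auto simp: m1_def)
  have h2: "\<And>i. 0 < m2 i \<and> m2 i < 1" using h1 assms(2) by (auto simp: m2_def)
  have mm: "m = fun_upd m2 2 (m 2)" unfolding m2_def m1_def by (rule m)
  have "J (prof m) = J (prof m2)"
    using ord_step[where m=m2 and y="m 2" and k=2, OF assms(1) h2] assms(2)[of 2] by (simp flip: mm)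
  also have "\<dots> = J (prof m1)"
    using ord_step[where m=m1 and y="m 1" and k=1, OF assms(1) h1] assms(2)[of 1] by (simp add: m2_def)
  also have "\<dots> = J (prof m0)"
    using ord_step[where m=m0 and y="m 0" and k=0, OF assms(1) h0] assms(2)[of 0] by (simp add: m1_def)
  finally show ?thesis by (simp add: m0_def)
qed

lemma welfare_prof:
  assumes "bij \<mu>"
  shows "social_welfare (prof m) \<mu> = 1 + m (inv \<mu> 1)"
proof -
  define g where "g k = prof m (inv \<mu> k) k" for k
  have ii: "\<And>x. inv \<mu> (\<mu> x) = x" using assms by (simp add: bij_is_inj)
  have "social_welfare (prof m) \<mu> = (\<Sum>i\<in>UNIV. g (\<mu> i))"
    unfolding social_welfare_def g_def ii ..
  also have "\<dots> = sum g UNIV"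
    using assms by (rule sum.reindex_bij_betw)
  also have "\<dots> = g 0 + g 1 + g 2" unfolding UNIV3 by simp
  also have "\<dots> = 1 + m (inv \<mu> 1)" by (simp add: g_def prof_def row_def)
  finally show ?thesis .
qed

lemma welfare_nonneg:
  assumes "u \<in> profiles" shows "0 \<le> social_welfare u \<mu>"
proof -
  have "\<And>i k. 0 \<le> u i k"
  proof -
    fix i k
    have "Min (range (u i)) \<le> u i k" by (rule Min_le) auto
    moreover have "Min (range (u i)) = 0" using assms by (simp add: profiles_def unit_range_def)
    ultimately show "0 \<le> u i k" by simp
  qed
  thus ?thesis unfolding social_welfare_def by (simp add: sum_nonneg)
qed

lemma ratio_nonneg:
  assumes "u \<in> profiles"
  shows "0 \<le> measure_pmf.expectation (J u) (social_welfare u) / opt_welfare u"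
proof -
  have "0 \<le> measure_pmf.expectation (J u) (social_welfare u)"
    using welfare_nonneg[OF assms] by (simp add: integral_nonneg)
  moreover have "social_welfare u id \<le> opt_welfare u"
    unfolding opt_welfare_def by (rule Max_ge) (auto simp: outcomes_def)
  hence "0 \<le> opt_welfare u" using welfare_nonneg[OF assms, of id] by linarith
  ultimately show ?thesis by simp
qed

theorem mainTheorem13:
  fixes J :: "profile \<Rightarrow> outcome pmf"
  assumes "mechanism J" and "ordinal J"
  shows "approx_ratio J \<le> 2 / 3"
proof -
  define p where "p = J (prof (\<lambda>_. 1/2))"
  have p0: "prof (\<lambda>_. 1/2) \<in> profiles" by (rule prof_in) simp
  have sp: "set_pmf p \<subseteq> outcomes" using assms(1) p0 by (simp add: mechanism_def p_def)
  have fo: "finite outcomes" by simp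
  define q where "q j = (\<Sum>\<mu>\<in>outcomes. (if \<mu> j = 1 then 1 else 0) * pmf p \<mu>)" for j
  have s1: "(\<Sum>\<mu>\<in>outcomes. pmf p \<mu>) = 1" using sum_pmf_eq_1[OF fo sp] .
  have "(\<Sum>j\<in>UNIV. q j) = (\<Sum>\<mu>\<in>outcomes. (\<Sum>j\<in>UNIV. (if \<mu> j = 1 then 1 else 0)) * pmf p \<mu>)"
    unfolding q_def by (subst sum.swap) (simp add: sum_distrib_right)
  also have "\<dots> = (\<Sum>\<mu>\<in>outcomes. pmf p \<mu>)"
  proof (rule sum.cong)
    fix \<mu> assume "\<mu> \<in> outcomes"
    hence b: "bij \<mu>" by (simp add: outcomes_def)
    have "\<And>j. (\<mu> j = 1) = (j = inv \<mu> 1)" using b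
      by (metis bij_inv_eq_iff)
    hence "(\<Sum>j\<in>UNIV. (if \<mu> j = 1 then 1 else 0::real)) = 1" by simp
    thus "(\<Sum>j\<in>UNIV. (if \<mu> j = 1 then 1 else 0)) * pmf p \<mu> = pmf p \<mu>" by simp
  qed simp
  finally have "(\<Sum>j\<in>UNIV. q j) = 1" using s1 by simp
  moreover have "(\<Sum>j\<in>UNIV. q j) = q 0 + q 1 + q 2" unfolding UNIV3 by simp
  ultimately have "q 0 + q 1 + q 2 = 1" by simp
  hence "\<exists>j. q j \<le> 1/3"
  proof -
    assume h: "q 0 + q 1 + q 2 = 1"
    show ?thesis
    proof (rule ccontr)
      assume "\<not> ?thesis"
      hence "q 0 > 1/3" "q 1 > 1/3" "q 2 > 1/3" by (auto simp: not_le)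
      thus False using h by linarith
    qed
  qed
  then obtain j where qj: "q j \<le> 1/3" by blast
  show ?thesis
  proof (rule field_le_epsilon)
    fix e :: real assume e: "0 < e"
  define d where "d = min (1/4) (e/2)"
  have d0: "0 < d" "d \<le> 1/4" "d \<le> e/2" using e by (auto simp: d_def)
  define md where "md i = (if i = j then 1 - d else d)" for i
  have mdr: "\<And>i. 0 < md i \<and> md i < 1" using d0 by (auto simp: md_def)
  define U where "U = prof md"
  have U: "U \<in> profiles" unfolding U_def by (rule prof_in[OF mdr])
  have JU: "J U = p" unfolding U_def p_def by (rule ord_J[OF assms(2) mdr])
  have w: "social_welfare U \<mu> = (1 + d) + (1 - 2*d) * (if \<mu> j = 1 then 1 else 0)"
    if "\<mu> \<in> outcomes" for \<mu>
  proof -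
    have b: "bij \<mu>" using that by (simp add: outcomes_def)
    have "(inv \<mu> 1 = j) = (\<mu> j = 1)" using b by (metis bij_inv_eq_iff)
    thus ?thesis unfolding U_def welfare_prof[OF b] md_def by auto
  qed
  have E: "measure_pmf.expectation (J U) (social_welfare U) = (1 + d) + (1 - 2*d) * q j"
  proof -
    have "measure_pmf.expectation (J U) (social_welfare U)
        = (\<Sum>\<mu>\<in>outcomes. social_welfare U \<mu> * pmf p \<mu>)"
      unfolding JU by (rule integral_measure_pmf_real[OF fo]) (use sp in auto)
    also have "\<dots> = (\<Sum>\<mu>\<in>outcomes. (1 + d) * pmf p \<mu>
        + (1 - 2*d) * ((if \<mu> j = 1 then 1 else 0) * pmf p \<mu>))"
      by (rule sum.cong) (simp_all add: w algebra_simps)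
    also have "\<dots> = (1 + d) + (1 - 2*d) * q j"
      unfolding sum.distrib q_def by (simp add: sum_distrib_left[symmetric] s1)
    finally show ?thesis .
  qed
  define \<sigma> where "\<sigma> = (\<lambda>i::3. i + (1 - j))"
  have bs: "bij \<sigma>" unfolding \<sigma>_def by (rule bij_plus_right)
  have "\<sigma> j = 1" by (simp add: \<sigma>_def)
  hence "inv \<sigma> 1 = j" using bij_inv_eq_iff[OF bs] by metis
  hence "social_welfare U \<sigma> = 2 - d"
    unfolding U_def welfare_prof[OF bs] by (simp add: md_def)
  moreover have "social_welfare U \<sigma> \<le> opt_welfare U"
    unfolding opt_welfare_def by (rule Max_ge) (use bs in \<open>auto simp: outcomes_def\<close>)
  ultimately have opt: "2 - d \<le> opt_welfare U" by simp
  have num: "(1 + d) + (1 - 2*d) * q j \<le> 4/3 + d/3"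
  proof -
    have "(1 - 2*d) * q j \<le> (1 - 2*d) * (1/3)"
      using qj d0 by (intro mult_left_mono) auto
    thus ?thesis by simp
  qed
  have ed: "e * d \<le> e / 4" using d0 e by (simp add: mult_left_mono)
  have key: "4/3 + d/3 \<le> (2/3 + e) * (2 - d)"
  proof -
    have "(2/3 + e) * (2 - d) = 4/3 - 2*d/3 + 2*e - e*d" by (simp add: field_simps)
    thus ?thesis using ed d0 by linarith
  qed
  have pos: "0 < 2 - d" using d0 by simp
  have nn: "0 \<le> (1 + d) + (1 - 2*d) * q j"
  proof -
    have "0 \<le> q j" unfolding q_def by (intro sum_nonneg) auto
    thus ?thesis using d0 by simp
  qed
  have r: "measure_pmf.expectation (J U) (social_welfare U) / opt_welfare U \<le> 2/3 + e"
  proof -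
    have "measure_pmf.expectation (J U) (social_welfare U) / opt_welfare U
        \<le> ((1 + d) + (1 - 2*d) * q j) / (2 - d)"
      unfolding E using opt pos nn by (intro divide_left_mono) auto
    also have "\<dots> \<le> (4/3 + d/3) / (2 - d)"
      using num pos by (intro divide_right_mono) auto
    also have "\<dots> \<le> 2/3 + e" using key pos by (simp add: divide_le_eq)
    finally show ?thesis .
  qed
  have bdd: "bdd_below ((\<lambda>u. measure_pmf.expectation (J u) (social_welfare u) / opt_welfare u) ` profiles)"
    by (rule bdd_belowI[where m=0]) (auto intro: ratio_nonneg)
  show "approx_ratio J \<le> 2/3 + e"
    unfolding approx_ratio_def by (rule cINF_lower2[OF bdd U]) (use r in simp)
qed
qed

end
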